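(* Let $p\in\{1,2,\dots\}\cup\{\infty\}$ and let $\mathbf{\Delta}:\ell^n\to\ell^n$ be strictly causal. Assume that for some $\rho>0$ and $0\le\gamma<1$, $\|\mathbf{\Delta}(\mathbf{x})\|_p\le\gamma\|\mathbf{x}\|_p$ for all $\mathbf{x}\in\ell^n$ with $\|\mathbf{x}\|_p<\rho$. Then $(\mathbf{I}-\mathbf{\Delta})^{-1}$ is continuous at $\mathbf{w}=0$ as a map $\ell^n_p\to\ell^n_p$: for every $\varepsilon>0$ there exists $\delta>0$ such that $\|\mathbf{w}\|_p<\delta$ implies $\|(\mathbf{I}-\mathbf{\Delta})^{-1}(\mathbf{w})\|_p<\varepsilon$ (in fact one can take $\delta=(1-\gamma)\min\{\rho,\varepsilon\}$).
   Context: $\ell^n$ is the space of sequences in $\mathbb{R}^n$; $|\cdot|$ a fixed norm on $\mathbb{R}^n$; $\|\cdot\|_p$ the usual $\ell_p$ norm of sequences built from $|\cdot|$ (sup for $p=\infty$), $\ell^n_p=\{\mathbf{x}:\|\mathbf{x}\|_p<\infty\}$. $\mathbf{\Delta}$ strictly causal means $(\mathbf{\Delta}(\mathbf{x}))_t=\Delta_t(x_{t-1},\dots,x_0)$; then $(\mathbf{I}-\mathbf{\Delta})^{-1}(\mathbf{w})$ is the unique $\mathbf{y}$ with $\mathbf{y}=\mathbf{\Delta}(\mathbf{y})+\mathbf{w}$. *)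

theory Defs
  imports "HOL-Analysis.Analysis"
begin

definition is_norm :: "(real^'n \<Rightarrow> real) \<Rightarrow> bool" where
  "is_norm N \<longleftrightarrow> (\<forall>x. N x \<ge> 0) \<and> (\<forall>x. N x = 0 \<longleftrightarrow> x = 0)
     \<and> (\<forall>x y. N (x + y) \<le> N x + N y) \<and> (\<forall>c x. N (c *\<^sub>R x) = \<bar>c\<bar> * N x)"

definition lp_norm :: "(real^'n \<Rightarrow> real) \<Rightarrow> enat \<Rightarrow> (nat \<Rightarrow> real^'n) \<Rightarrow> ennreal" where
  "lp_norm N p x = (case p of
      enat k \<Rightarrow> (if summable (\<lambda>t. N (x t) ^ k)
                 then ennreal (root k (\<Sum>t. N (x t) ^ k)) else \<infinity>)
    | \<infinity> \<Rightarrow> (SUP t. ennreal (N (x t))))"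

definition strictly_causal :: "((nat \<Rightarrow> 'a) \<Rightarrow> (nat \<Rightarrow> 'a)) \<Rightarrow> bool" where
  "strictly_causal D \<longleftrightarrow> (\<forall>x y t. (\<forall>s<t. x s = y s) \<longrightarrow> D x t = D y t)"

definition inv_I_minus :: "((nat \<Rightarrow> 'a::ab_group_add) \<Rightarrow> (nat \<Rightarrow> 'a)) \<Rightarrow> (nat \<Rightarrow> 'a) \<Rightarrow> (nat \<Rightarrow> 'a)" where
  "inv_I_minus D w = (THE y. y = (\<lambda>t. D y t + w t))"

end

theory Submission
  imports Defs
begin

lemma root_le_iff_pow: assumes "k\<ge>1" "(s::real)\<ge>0" "r\<ge>0" shows "root k s \<le> r \<longleftrightarrow> s \<le> r^k"
proof -
  have "root k (r^k) = r" using assms by (simp add: real_root_pos_unique)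
  then show ?thesis using assms
    by (metis real_root_le_iff less_le_trans zero_less_one)
qed

lemma lp_enat_le_iff:
  assumes "k \<ge> 1" "r \<ge> 0" "\<forall>v. N v \<ge> 0"
  shows "lp_norm N (enat k) x \<le> ennreal r \<longleftrightarrow> summable (\<lambda>t. N (x t)^k) \<and> (\<Sum>t. N (x t)^k) \<le> r^k"
proof (cases "summable (\<lambda>t. N (x t)^k)")
  case True
  have "(\<Sum>t. N (x t)^k) \<ge> 0" using assms True by (simp add: suminf_nonneg)
  then show ?thesis using True assms
    by (simp add: lp_norm_def root_le_iff_pow ennreal_le_iff)
qed (simp add: lp_norm_def top_unique)

lemma conv: fixes a b A B :: real assumes "a\<ge>0" "b\<ge>0" "A>0" "B>0" "k\<ge>1"
  shows "(a+b)^k \<le> (A+B)^(k-1) * (A*(a/A)^k + B*(b/B)^k)"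
proof -
  have c: "convex_on {0::real..} (\<lambda>x. x^k)"
  proof (cases "even k")
    case True then show ?thesis using convex_power_even convex_on_subset by blast
  qed (simp add: convex_power_odd)
  define t where "t = B/(A+B)"
  have t: "t \<ge> 0" "t \<le> 1" using assms by (auto simp: t_def)
  have eq2: "1 - t = A/(A+B)"
    using assms by (auto simp: t_def field_simps)
  have nz: "A \<noteq> 0" "B \<noteq> 0" "A+B \<noteq> 0" using assms by auto
  have eq: "(1 - t) *\<^sub>R (a/A) + t *\<^sub>R (b/B) = (a+b)/(A+B)"
  proof -
    have e1: "A/(A+B)*(a/A) = a/(A+B)" using nz by simp
    have e2: "B/(A+B)*(b/B) = b/(A+B)" using nz by simp
    show ?thesis unfolding eq2 scaleR_conv_of_real of_real_eq_id id_def
      by (simp only: e1 flip: t_def) (simp add: t_def e2 add_divide_distrib nz)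
  qed
  have "((a+b)/(A+B))^k \<le> (1-t) * (a/A)^k + t * (b/B)^k"
    using convex_onD[OF c t, of "a/A" "b/B"] assms eq by simp
  hence "(A+B)^k * ((a+b)/(A+B))^k \<le> (A+B)^k * ((1-t) * (a/A)^k + t * (b/B)^k)"
    using assms by (simp add: mult_left_mono)
  moreover have "(A+B)^k * ((a+b)/(A+B))^k = (a+b)^k" using assms by (simp add: power_divide)
  moreover have "(A+B)^k = (A+B)^(k-1) * (A+B)" using assms
    by (metis le_add_diff_inverse2 power_Suc2 Suc_eq_plus1)
  moreover have "(A+B) * ((1-t) * (a/A)^k + t * (b/B)^k) = A*(a/A)^k + B*(b/B)^k"
  proof -
    have f1: "(A+B)*(1-t) = A" using nz eq2 by simp
    have f2: "(A+B)*t = B" using nz t_def by simp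
    have "(A+B) * ((1-t) * (a/A)^k + t * (b/B)^k) = ((A+B)*(1-t)) * (a/A)^k + ((A+B)*t) * (b/B)^k"
      by (simp add: algebra_simps)
    then show ?thesis by (simp only: f1 f2)
  qed
  ultimately show ?thesis by (simp add: mult.assoc)
qed

lemma Ninfo: assumes "is_norm N" shows "\<forall>v. N v \<ge> 0" "N 0 = 0" "\<And>u v. N (u+v) \<le> N u + N v"
  using assms unfolding is_norm_def by auto

lemma lp_inf_le_iff: "lp_norm N \<infinity> x \<le> ennreal r \<longleftrightarrow> (\<forall>t. ennreal (N (x t)) \<le> ennreal r)"
  by (simp add: lp_norm_def SUP_le_iff)

lemma enat_ge1: "enat k \<ge> 1 \<Longrightarrow> k \<ge> 1" by (simp add: one_enat_def)

lemma lp_mono: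
  assumes "is_norm N" "p \<ge> 1" "\<forall>t. N (x t) \<le> N (y t)" "lp_norm N p y \<le> ennreal r" "r \<ge> 0"
  shows "lp_norm N p x \<le> ennreal r"
proof (cases p)
  case (enat k)
  have k: "k \<ge> 1" using assms enat enat_ge1 by simp
  note nn = Ninfo(1)[OF assms(1)]
  have le: "N (x t)^k \<le> N (y t)^k" for t using assms nn by (simp add: power_mono)
  from assms(4) have s: "summable (\<lambda>t. N (y t)^k)" "(\<Sum>t. N (y t)^k) \<le> r^k"
    using lp_enat_le_iff[OF k assms(5) nn] enat by auto
  have s2: "summable (\<lambda>t. N (x t)^k)"
    by (rule summable_comparison_test'[OF s(1)]) (use le nn in auto)
  have "(\<Sum>t. N (x t)^k) \<le> (\<Sum>t. N (y t)^k)" by (rule suminf_le[OF le s2 s(1)])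
  then show ?thesis using lp_enat_le_iff[OF k assms(5) nn] enat s s2 by auto
next
  case infinity
  then show ?thesis using assms lp_inf_le_iff
    by (metis ennreal_leI order_trans)
qed

lemma lp_limit:
  assumes "is_norm N" "p \<ge> 1" "\<And>T. \<exists>z. lp_norm N p z \<le> ennreal r \<and> (\<forall>t<T. z t = x t)" "r \<ge> 0"
  shows "lp_norm N p x \<le> ennreal r"
proof (cases p)
  case (enat k)
  have k: "k \<ge> 1" using assms enat enat_ge1 by simp
  note nn = Ninfo(1)[OF assms(1)]
  have ps: "(\<Sum>t<T. N (x t)^k) \<le> r^k" for T
  proof -
    obtain z where z: "lp_norm N p z \<le> ennreal r" "\<forall>t<T. z t = x t" using assms(3) by blast
    from z(1) have s: "summable (\<lambda>t. N (z t)^k)" "(\<Sum>t. N (z t)^k) \<le> r^k"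
      using lp_enat_le_iff[OF k assms(4) nn] enat by auto
    have "(\<Sum>t<T. N (x t)^k) = (\<Sum>t<T. N (z t)^k)" using z(2) by simp
    also have "\<dots> \<le> (\<Sum>t. N (z t)^k)" by (rule sum_le_suminf[OF s(1)]) (use nn in auto)
    finally show ?thesis using s(2) by linarith
  qed
  have s: "summable (\<lambda>t. N (x t)^k)"
    by (rule summableI_nonneg_bounded[where x="r^k"]) (use nn ps in auto)
  have "(\<Sum>t. N (x t)^k) \<le> r^k" by (rule suminf_le_const[OF s]) (use ps in auto)
  then show ?thesis using lp_enat_le_iff[OF k assms(4) nn] enat s by auto
next
  case infinity
  have "ennreal (N (x t)) \<le> ennreal r" for t
  proof -
    obtain z where z: "lp_norm N p z \<le> ennreal r" "\<forall>s<Suc t. z s = x s" using assms(3) by blast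
    then show ?thesis using infinity lp_inf_le_iff by (metis lessI)
  qed
  then show ?thesis using infinity lp_inf_le_iff by blast
qed

lemma zero_from_sum:
  fixes f :: "nat \<Rightarrow> real"
  assumes "summable f" "\<forall>t. f t \<ge> 0" "suminf f \<le> 0" shows "f t = 0"
proof -
  have "sum f {t} \<le> suminf f" by (rule sum_le_suminf[OF assms(1)]) (use assms in auto)
  then have "f t \<le> suminf f" by simp
  then show ?thesis using assms(2,3) by (metis order.antisym order.trans)
qed

lemma lp_zero_pt:
  assumes "is_norm N" "p \<ge> 1" "lp_norm N p x \<le> ennreal 0" shows "N (x t) = 0"
proof (cases p)
  case (enat k)
  have k: "k \<ge> 1" using assms enat enat_ge1 by simp
  note nn = Ninfo(1)[OF assms(1)]
  have s: "summable (\<lambda>t. N (x t)^k)" "(\<Sum>t. N (x t)^k) \<le> 0"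
    using lp_enat_le_iff[OF k _ nn, of 0] assms(3) enat k by (auto simp: power_0_left)
  have "N (x t)^k = 0" by (rule zero_from_sum[OF s(1) _ , of t]) (use s nn in auto)
  then show ?thesis by simp
next
  case infinity
  then show ?thesis using assms lp_inf_le_iff Ninfo(1)[OF assms(1)]
    by (metis ennreal_le_iff order.antisym order.refl)
qed

lemma lp_tri:
  assumes "is_norm N" "p \<ge> 1" "lp_norm N p x \<le> ennreal A" "lp_norm N p y \<le> ennreal B" "A \<ge> 0" "B \<ge> 0"
  shows "lp_norm N p (\<lambda>t. x t + y t) \<le> ennreal (A + B)"
proof -
  note nn = Ninfo(1)[OF assms(1)] and tri = Ninfo(3)[OF assms(1)]
  show ?thesis
  proof (cases "A = 0")
    case True
    have "N (x t) = 0" for t using lp_zero_pt[OF assms(1,2)] assms(3) True by simp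
    then have "\<forall>t. N (x t + y t) \<le> N (y t)" using tri by (metis add_0)
    then show ?thesis using lp_mono[OF assms(1,2) _ assms(4,6)] True by simp
  next
    case Anz: False
    show ?thesis
    proof (cases "B = 0")
      case True
      have "N (y t) = 0" for t using lp_zero_pt[OF assms(1,2)] assms(4) True by simp
      then have "\<forall>t. N (x t + y t) \<le> N (x t)" using tri by (metis add_0_right)
      then show ?thesis using lp_mono[OF assms(1,2) _ assms(3,5)] True by simp
    next
      case Bnz: False
      have A: "A > 0" and B: "B > 0" using Anz Bnz assms by auto
      show ?thesis
      proof (cases p)
        case (enat k)
        have k: "k \<ge> 1" using assms enat enat_ge1 by simp
        have sx: "summable (\<lambda>t. N (x t)^k)" "(\<Sum>t. N (x t)^k) \<le> A^k"
          using lp_enat_le_iff[OF k assms(5) nn] assms(3) enat by auto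
        have sy: "summable (\<lambda>t. N (y t)^k)" "(\<Sum>t. N (y t)^k) \<le> B^k"
          using lp_enat_le_iff[OF k assms(6) nn] assms(4) enat by auto
        define ca where "ca = A / A^k"
        define cb where "cb = B / B^k"
        define g where "g t = (A+B)^(k-1) * (ca * N (x t)^k + cb * N (y t)^k)" for t
        have pa: "A * (a/A)^k = ca * a^k" for a unfolding ca_def by (simp add: power_divide)
        have pb: "B * (b/B)^k = cb * b^k" for b unfolding cb_def by (simp add: power_divide)
        have le: "N (x t + y t)^k \<le> g t" for t
        proof -
          have "N (x t + y t)^k \<le> (N (x t) + N (y t))^k" using tri nn by (simp add: power_mono)
          also have "\<dots> \<le> g t" using conv[OF nn[rule_format] nn[rule_format] A B k] unfolding g_def pa pb by simp
          finally show ?thesis .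
        qed
        have gs: "summable g" unfolding g_def
          by (intro summable_mult summable_add summable_mult sx sy)
        have gsum: "suminf g = (A+B)^(k-1) * (ca * (\<Sum>t. N (x t)^k) + cb * (\<Sum>t. N (y t)^k))"
        proof -
          have h1: "(\<Sum>t. ca*N(x t)^k + cb*N(y t)^k) = (\<Sum>t. ca*N(x t)^k) + (\<Sum>t. cb*N(y t)^k)"
            by (rule suminf_add[symmetric]) (intro summable_mult sx sy)+
          have h2: "summable (\<lambda>t. ca*N(x t)^k + cb*N(y t)^k)"
            by (intro summable_add summable_mult sx sy)
          show ?thesis unfolding g_def suminf_mult[OF h2] h1 suminf_mult[OF sx(1)] suminf_mult[OF sy(1)] ..
        qed
        have ca0: "ca \<ge> 0" "cb \<ge> 0" using A B by (auto simp: ca_def cb_def)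
        have "ca * (\<Sum>t. N (x t)^k) \<le> ca * A^k" using sx ca0 by (simp add: mult_left_mono)
        moreover have "ca * A^k = A" using A by (simp add: ca_def)
        moreover have "cb * (\<Sum>t. N (y t)^k) \<le> cb * B^k" using sy ca0 by (simp add: mult_left_mono)
        moreover have "cb * B^k = B" using B by (simp add: cb_def)
        ultimately have "ca * (\<Sum>t. N (x t)^k) + cb * (\<Sum>t. N (y t)^k) \<le> A + B" by linarith
        then have "suminf g \<le> (A+B)^(k-1) * (A+B)" unfolding gsum using A B by (simp add: mult_left_mono)
        also have "\<dots> = (A+B)^k" using k by (metis le_add_diff_inverse2 power_Suc2 Suc_eq_plus1)
        finally have gle: "suminf g \<le> (A+B)^k" .
        have s2: "summable (\<lambda>t. N (x t + y t)^k)"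
          by (rule summable_comparison_test'[OF gs]) (use le nn in auto)
        have "(\<Sum>t. N (x t + y t)^k) \<le> suminf g" by (rule suminf_le[OF le s2 gs])
        then show ?thesis using lp_enat_le_iff[OF k _ nn, of "A+B"] A B s2 gle enat by auto
      next
        case infinity
        have "ennreal (N (x t + y t)) \<le> ennreal (A + B)" for t
        proof -
          have "ennreal (N (x t)) \<le> ennreal A" "ennreal (N (y t)) \<le> ennreal B"
            using assms(3,4) infinity lp_inf_le_iff by blast+
          then have "N (x t) \<le> A" "N (y t) \<le> B" using assms(5,6) ennreal_le_iff by auto
          then show ?thesis using tri[of "x t" "y t"] by (intro ennreal_leI) linarith
        qed
        then show ?thesis using infinity lp_inf_le_iff by blast
      qed
    qed
  qed
qed

lemma sol_exists:
  fixes D :: "(nat \<Rightarrow> 'a::ab_group_add) \<Rightarrow> (nat \<Rightarrow> 'a)"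
  assumes "strictly_causal D" shows "\<exists>y. y = (\<lambda>t. D y t + w t)"
proof -
  define Y where "Y = rec_nat (\<lambda>_. 0) (\<lambda>_ Z. (\<lambda>t. D Z t + w t))"
  have Y0: "Y 0 = (\<lambda>_. 0)" and YS: "Y (Suc k) = (\<lambda>t. D (Y k) t + w t)" for k
    by (simp_all add: Y_def)
  have agree: "\<forall>j t. k \<le> j \<longrightarrow> t < k \<longrightarrow> Y j t = Y k t" for k
  proof (induction k)
    case 0 then show ?case by simp
  next
    case (Suc k)
    show ?case
    proof (intro allI impI)
      fix j t assume j: "Suc k \<le> j" and t: "t < Suc k"
      then obtain j' where j': "j = Suc j'" "k \<le> j'" by (cases j) auto
      have "\<forall>s<t. Y j' s = Y k s"
      proof (intro allI impI)
        fix s assume "s < t" then have "s < k" using t by simp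
        then show "Y j' s = Y k s" using Suc.IH[rule_format, OF j'(2)] by blast
      qed
      then have "D (Y j') t = D (Y k) t" using assms unfolding strictly_causal_def by blast
      then show "Y j t = Y (Suc k) t" using j' by (simp add: YS)
    qed
  qed
  define y where "y t = Y (Suc t) t" for t
  have "y t = D y t + w t" for t
  proof -
    have "y s = Y t s" if "s < t" for s
      unfolding y_def using agree[of "Suc s", rule_format, of t s] that by simp
    then have "\<forall>s<t. y s = Y t s" by blast
    then have "D y t = D (Y t) t" using assms unfolding strictly_causal_def by blast
    then show ?thesis unfolding y_def by (simp add: YS)
  qed
  then show ?thesis by blast
qed

lemma sol_unique:
  fixes D :: "(nat \<Rightarrow> 'a::ab_group_add) \<Rightarrow> (nat \<Rightarrow> 'a)"
  assumes "strictly_causal D" "y = (\<lambda>t. D y t + w t)" "z = (\<lambda>t. D z t + w t)" shows "y = z"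
proof -
  have "y t = z t" for t
  proof (induction t rule: less_induct)
    case (less t)
    then have "D y t = D z t" using assms(1) unfolding strictly_causal_def by blast
    then show ?case using fun_cong[OF assms(2), of t] fun_cong[OF assms(3), of t] by simp
  qed
  then show ?thesis by blast
qed

lemma inv_sol:
  fixes D :: "(nat \<Rightarrow> 'a::ab_group_add) \<Rightarrow> (nat \<Rightarrow> 'a)"
  assumes "strictly_causal D" shows "inv_I_minus D w = (\<lambda>t. D (inv_I_minus D w) t + w t)"
proof -
  have "\<exists>!y. y = (\<lambda>t. D y t + w t)" using sol_exists[OF assms] sol_unique[OF assms] by blast
  then show ?thesis unfolding inv_I_minus_def by (rule theI')
qed

theorem mainTheorem7:
  fixes N :: "real^'n \<Rightarrow> real" and p :: enat
    and D :: "(nat \<Rightarrow> real^'n) \<Rightarrow> (nat \<Rightarrow> real^'n)"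
    and \<rho> \<gamma> :: real
  assumes "is_norm N" and "p \<ge> 1"
    and "strictly_causal D"
    and "\<rho> > 0" and "0 \<le> \<gamma>" and "\<gamma> < 1"
    and "\<And>x. lp_norm N p x < ennreal \<rho> \<Longrightarrow> lp_norm N p (D x) \<le> ennreal \<gamma> * lp_norm N p x"
  shows "(\<forall>\<epsilon>>0. \<exists>\<delta>>0. \<forall>w. lp_norm N p w < ennreal \<delta>
             \<longrightarrow> lp_norm N p (inv_I_minus D w) < ennreal \<epsilon>)
       \<and> (\<forall>\<epsilon>>0. \<forall>w. lp_norm N p w < ennreal ((1 - \<gamma>) * min \<rho> \<epsilon>)
             \<longrightarrow> lp_norm N p (inv_I_minus D w) < ennreal \<epsilon>)"
proof -
  note nn = Ninfo(1)[OF assms(1)] and N0 = Ninfo(2)[OF assms(1)]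
  have second: "lp_norm N p (inv_I_minus D w) < ennreal \<epsilon>"
    if e: "\<epsilon> > 0" and w: "lp_norm N p w < ennreal ((1 - \<gamma>) * min \<rho> \<epsilon>)" for \<epsilon> w
  proof -
    define y where "y = inv_I_minus D w"
    have ysol: "y t = D y t + w t" for t using fun_cong[OF inv_sol[OF assms(3), of w], of t] y_def by simp
    have "lp_norm N p w < top" using w ennreal_less_top by (rule order.strict_trans)
    then obtain W where W: "lp_norm N p w = ennreal W" "W \<ge> 0" unfolding less_top_ennreal by blast
    have Wlt: "W < (1 - \<gamma>) * min \<rho> \<epsilon>" using w W by (simp add: ennreal_less_iff)
    define c where "c = W / (1 - \<gamma>)"
    have g1: "1 - \<gamma> > 0" using assms by simp
    have c0: "c \<ge> 0" using W g1 by (simp add: c_def)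
    have m1: "(1-\<gamma>) * min \<rho> \<epsilon> \<le> (1-\<gamma>) * \<rho>" "(1-\<gamma>) * min \<rho> \<epsilon> \<le> (1-\<gamma>) * \<epsilon>"
      using g1 by (simp_all add: mult_left_mono)
    have "W < (1-\<gamma>) * \<rho>" "W < (1-\<gamma>) * \<epsilon>" using Wlt m1 by linarith+
    then have clt: "c < min \<rho> \<epsilon>" using g1 by (simp add: c_def pos_divide_less_eq mult.commute)
    have ceq: "\<gamma> * c + W = c" using g1 by (simp add: c_def field_simps)
    have "\<gamma> * c \<ge> 0" using c0 assms(5) by simp
    then have Wc: "W \<le> c" using ceq by linarith
    define u where "u T = (\<lambda>t. if t < T then y t else 0)" for T
    have ub: "lp_norm N p (u T) \<le> ennreal c" for T
    proof (induction T)
      case 0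
      have "\<forall>t. N (u 0 t) \<le> N (w t)" using N0 nn by (simp add: u_def)
      moreover have "lp_norm N p w \<le> ennreal c" using W Wc by (simp add: ennreal_leI)
      ultimately show ?case using lp_mono[OF assms(1,2) _ _ c0] by blast
    next
      case (Suc T)
      have "c < \<rho>" using clt by simp
      then have "ennreal c < ennreal \<rho>" using assms(4) by (simp add: ennreal_lessI)
      then have "lp_norm N p (u T) < ennreal \<rho>" using Suc by (rule order.strict_trans1[rotated])
      then have "lp_norm N p (D (u T)) \<le> ennreal \<gamma> * lp_norm N p (u T)" by (rule assms(7))
      also have "\<dots> \<le> ennreal \<gamma> * ennreal c" using Suc by (simp add: mult_left_mono)
      also have "\<dots> = ennreal (\<gamma> * c)" using assms(5) c0 by (simp add: ennreal_mult)
      finally have Db: "lp_norm N p (D (u T)) \<le> ennreal (\<gamma> * c)" .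
      have sb: "lp_norm N p (\<lambda>t. D (u T) t + w t) \<le> ennreal c"
        using lp_tri[OF assms(1,2) Db, of w W] W assms(5) c0 ceq by simp
      have "N (u (Suc T) t) \<le> N (D (u T) t + w t)" for t
      proof (cases "t < Suc T")
        case True
        have "\<forall>s<t. y s = u T s" using True by (simp add: u_def)
        then have "D y t = D (u T) t" using assms(3) unfolding strictly_causal_def by blast
        then show ?thesis using True ysol[of t] by (simp add: u_def)
      next
        case False then show ?thesis using N0 nn by (simp add: u_def)
      qed
      then show ?case using lp_mono[OF assms(1,2) _ sb c0] by blast
    qed
    have "lp_norm N p y \<le> ennreal c"
    proof (rule lp_limit[OF assms(1,2) _ c0])
      fix T show "\<exists>z. lp_norm N p z \<le> ennreal c \<and> (\<forall>t<T. z t = y t)"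
        using ub[of T] by (intro exI[of _ "u T"]) (simp add: u_def)
    qed
    also have "\<dots> < ennreal \<epsilon>" using clt c0 e by (simp add: ennreal_lessI)
    finally show ?thesis unfolding y_def .
  qed
  show ?thesis
  proof (intro conjI allI impI)
    fix \<epsilon> :: real assume e: "\<epsilon> > 0"
    show "\<exists>\<delta>>0. \<forall>w. lp_norm N p w < ennreal \<delta> \<longrightarrow> lp_norm N p (inv_I_minus D w) < ennreal \<epsilon>"
    proof -
      have "(1 - \<gamma>) * min \<rho> \<epsilon> > 0" using e assms(4,6) by simp
      then show ?thesis using second[OF e] by blast
    qed
  next
    fix \<epsilon> :: real and w assume "\<epsilon> > 0" "lp_norm N p w < ennreal ((1 - \<gamma>) * min \<rho> \<epsilon>)"
    then show "lp_norm N p (inv_I_minus D w) < ennreal \<epsilon>" by (rule second)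
  qed
qed

end
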